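(* Let $M,K,T$ be positive integers, $P_{\max}>0$, and fix a device index $k\in\{1,\dots,K\}$ with constants $\sigma_k^2>0$, $\delta_k^2>0$, $\omega_k^2>0$ and a power-splitting ratio $\rho_k\in(0,1]$. Let $\hat{\mathbf H}=[\hat{\bm h}_1,\dots,\hat{\bm h}_K]\in\mathbb C^{M\times K}$ be a random matrix with $\mathbb E[\|\hat{\bm h}_k\|^2]<\infty$, and let $\bm\phi_k\sim\mathcal{CN}(0,\omega_k^2\mathbf I_M)$ be independent of $\hat{\mathbf H}$; set $\bm h_k=\hat{\bm h}_k+\bm\phi_k$. Let $\bm\Theta$ be a (measurable) beamforming policy, i.e. a map $\hat{\mathbf H}\mapsto \mathbf F(\hat{\mathbf H})=[\bm f_1,\dots,\bm f_K]\in\mathbb C^{M\times K}$ with $\mathrm{Tr}(\mathbf F\mathbf F^H)\le P_{\max}$ for every $\hat{\mathbf H}$. Define the SINR \[ \Gamma_k=\frac{\rho_k|\bm h_k^H\bm f_k|^2}{\rho_k\big(\sum_{m\neq k}|\bm h_k^H\bm f_m|^2+\sigma_k^2\big)+\delta_k^2}, \] the quantity $\overline r_k(\rho_k,\bm\Theta)=\mathbb E_{\hat{\mathbf H},\bm\phi_k}[\log_2(1+\Gamma_k)]$, and the ergodic rate \[ \hat r_k^\circ(\rho_k,\bm\Theta)=\overline r_k(\rho_k,\bm\Theta)-\frac1T\sum_{m=1}^K\log_2\!\Big(1+\frac{T}{\rho_k\sigma_k^2+\delta_k^2}\,\mathrm{Var}(\bm h_k^H\bm f_m)\Big), \] where $\mathrm{Var}(X)=\mathbb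 E|X-\mathbb E X|^2$ is taken over the joint distribution of $(\hat{\mathbf H},\bm\phi_k)$. Then \[ \overline r_k(\rho_k,\bm\Theta)-\frac1T\sum_{m=1}^K\log_2\!\Big(1+\frac{TP_{\max}}{\delta_k^2}\,\mathbb E_{\hat{\mathbf H},\bm\phi_k}\big[\|\hat{\bm h}_k+\bm\phi_k\|^2\big]\Big)\;\le\;\hat r_k^\circ(\rho_k,\bm\Theta)\;\le\;\overline r_k(\rho_k,\bm\Theta). \]
   Context: Setting: downlink of a multi-antenna base station with $M$ antennas serving $K$ single-antenna devices; $\bm f_m$ is the beamformer for device $m$, $\rho_k$ is the fraction of received power sent to the information decoder of device $k$, $\sigma_k^2$ is the antenna noise variance, $\delta_k^2$ is the decoder noise variance, $\hat{\bm h}_k$ is the estimated channel and $\bm\phi_k$ the channel estimation error, $T$ is the channel coherence length. $\mathcal{CN}(0,\omega_k^2\mathbf I_M)$ denotes the circularly symmetric complex Gaussian distribution. *)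

theory Defs
  imports "HOL-Probability.Probability"
begin

(* A vector h in C^M is "complex ^ 'm"; a matrix [h_1,...,h_K] in C^{M x K} is
   represented by its list of columns, "complex ^ 'm ^ 'k", so that H $ k = h_k. *)

definition herm :: "complex ^ 'm \<Rightarrow> complex ^ 'm \<Rightarrow> complex" where
  "herm h f = (\<Sum>i\<in>UNIV. cnj (h $ i) * (f $ i))"

definition trFFH :: "complex ^ 'm ^ 'k \<Rightarrow> real" where
  "trFFH F = (\<Sum>m\<in>UNIV. (norm (F $ m))\<^sup>2)"

definition sinr :: "real \<Rightarrow> real \<Rightarrow> real \<Rightarrow> complex ^ 'm \<Rightarrow> complex ^ 'm ^ 'k \<Rightarrow> 'k \<Rightarrow> real" where
  "sinr \<rho> sigma2 delta2 h F k =
     \<rho> * (cmod (herm h (F $ k)))\<^sup>2 /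
     (\<rho> * ((\<Sum>m\<in>UNIV - {k}. (cmod (herm h (F $ m)))\<^sup>2) + sigma2) + delta2)"

definition cvar :: "'w measure \<Rightarrow> ('w \<Rightarrow> complex) \<Rightarrow> real" where
  "cvar P X = (\<integral>x. (cmod (X x - (\<integral>y. X y \<partial>P)))\<^sup>2 \<partial>P)"

(* phi ~ CN(0, omega2 I_M): real and imaginary parts of all components are
   independent real Gaussians with mean 0 and variance omega2/2 *)
definition complex_gaussian_vec :: "'w measure \<Rightarrow> ('w \<Rightarrow> complex ^ 'm) \<Rightarrow> real \<Rightarrow> bool" where
  "complex_gaussian_vec P phi omega2 \<longleftrightarrow>
     phi \<in> borel_measurable P \<and>
     prob_space.indep_vars P (\<lambda>_. borel)
        (\<lambda>(i, b) x. if b then Re (phi x $ i) else Im (phi x $ i)) (UNIV :: ('m \<times> bool) set) \<and>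
     (\<forall>i. distributed P lborel (\<lambda>x. Re (phi x $ i)) (normal_density 0 (sqrt (omega2 / 2))) \<and>
          distributed P lborel (\<lambda>x. Im (phi x $ i)) (normal_density 0 (sqrt (omega2 / 2))))"

definition rbar :: "'w measure \<Rightarrow> ('w \<Rightarrow> complex ^ 'm ^ 'k) \<Rightarrow> ('w \<Rightarrow> complex ^ 'm)
     \<Rightarrow> (complex ^ 'm ^ 'k \<Rightarrow> complex ^ 'm ^ 'k) \<Rightarrow> real \<Rightarrow> real \<Rightarrow> real \<Rightarrow> 'k \<Rightarrow> real" where
  "rbar P Hhat phi F \<rho> sigma2 delta2 k =
     (\<integral>x. log 2 (1 + sinr \<rho> sigma2 delta2 (Hhat x $ k + phi x) (F (Hhat x)) k) \<partial>P)"

definition rhat :: "'w measure \<Rightarrow> ('w \<Rightarrow> complex ^ 'm ^ 'k) \<Rightarrow> ('w \<Rightarrow> complex ^ 'm)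
     \<Rightarrow> (complex ^ 'm ^ 'k \<Rightarrow> complex ^ 'm ^ 'k) \<Rightarrow> real \<Rightarrow> real \<Rightarrow> real \<Rightarrow> nat \<Rightarrow> 'k \<Rightarrow> real" where
  "rhat P Hhat phi F \<rho> sigma2 delta2 T k =
     rbar P Hhat phi F \<rho> sigma2 delta2 k
     - 1 / real T * (\<Sum>m\<in>UNIV. log 2 (1 + real T / (\<rho> * sigma2 + delta2) *
          cvar P (\<lambda>x. herm (Hhat x $ k + phi x) (F (Hhat x) $ m))))"

end

theory Submission
  imports Defs
begin
lemma meas_nth[measurable (raw)]: "f \<in> borel_measurable M \<Longrightarrow> (\<lambda>x. (f x :: 'a::{real_normed_vector,second_countable_topology}^'n) $ i) \<in> borel_measurable M"
  by (rule borel_measurable_continuous_on[where f="\<lambda>v. v $ i"]) (auto intro: linear_continuous_on bounded_linear_vec_nth)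

lemma meas_herm[measurable (raw)]:
  assumes [measurable]: "f \<in> borel_measurable M" "g \<in> borel_measurable M"
  shows "(\<lambda>x. herm (f x :: complex^'m) (g x)) \<in> borel_measurable M"
proof -
  have a: "(\<lambda>x. f x $ i) \<in> borel_measurable M" "(\<lambda>x. g x $ i) \<in> borel_measurable M" for i
    by (rule meas_nth, measurable)+
  have b: "(\<lambda>x. cnj (f x $ i)) \<in> borel_measurable M" for i
    by (rule borel_measurable_continuous_on[OF _ a(1)]) (intro continuous_intros)
  show ?thesis unfolding herm_def by (intro borel_measurable_sum borel_measurable_times a b)
qed

lemma norm_sq_vec: "(norm (v::complex^'m))\<^sup>2 = (\<Sum>i\<in>UNIV. (cmod (v $ i))\<^sup>2)"
  by (simp add: norm_vec_def L2_set_def sum_nonneg)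

lemma herm_cs: "(cmod (herm h f))\<^sup>2 \<le> (norm h)\<^sup>2 * (norm f)\<^sup>2"
proof -
  have "cmod (herm h f) \<le> (\<Sum>i\<in>UNIV. cmod (h $ i) * cmod (f $ i))"
    unfolding herm_def by (rule order_trans[OF norm_sum]) (simp add: norm_mult)
  also have "\<dots> = (\<Sum>i\<in>UNIV. \<bar>cmod (h $ i)\<bar> * \<bar>cmod (f $ i)\<bar>)" by simp
  also have "\<dots> \<le> norm h * norm f"
    unfolding norm_vec_def by (rule L2_set_mult_ineq)
  finally have "cmod (herm h f) \<le> norm h * norm f" .
  then have "(cmod (herm h f))\<^sup>2 \<le> (norm h * norm f)\<^sup>2"
    by (intro power_mono) auto
  then show ?thesis by (simp add: power_mult_distrib)
qed

lemma cvar_le: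
  fixes X :: "'w \<Rightarrow> complex"
  assumes P: "prob_space P" and [measurable]: "X \<in> borel_measurable P"
    and sq: "integrable P (\<lambda>x. (cmod (X x))\<^sup>2)"
  shows "cvar P X \<le> (\<integral>x. (cmod (X x))\<^sup>2 \<partial>P)"
proof -
  interpret prob_space P by fact
  have iRe2: "integrable P (\<lambda>x. (Re (X x))\<^sup>2)"
    by (rule Bochner_Integration.integrable_bound[OF sq]) (auto simp: cmod_power2)
  have iIm2: "integrable P (\<lambda>x. (Im (X x))\<^sup>2)"
    by (rule Bochner_Integration.integrable_bound[OF sq]) (auto simp: cmod_power2)
  have iRe: "integrable P (\<lambda>x. Re (X x))"
    by (rule square_integrable_imp_integrable[OF _ iRe2]) measurable
  have iIm: "integrable P (\<lambda>x. Im (X x))"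
    by (rule square_integrable_imp_integrable[OF _ iIm2]) measurable
  have iX2: "integrable P (\<lambda>x. (X x)^2)"
    by (rule Bochner_Integration.integrable_bound[OF sq]) (auto simp: norm_power)
  have iX: "integrable P X"
    by (rule square_integrable_imp_integrable[OF _ iX2]) measurable
  have reE: "Re (\<integral>y. X y \<partial>P) = (\<integral>y. Re (X y) \<partial>P)" using iX by simp
  have imE: "Im (\<integral>y. X y \<partial>P) = (\<integral>y. Im (X y) \<partial>P)" using iX by simp
  have vRe: "variance (\<lambda>x. Re (X x)) = expectation (\<lambda>x. (Re (X x))\<^sup>2) - (expectation (\<lambda>x. Re (X x)))\<^sup>2"
    by (rule variance_eq[OF iRe iRe2])
  have vIm: "variance (\<lambda>x. Im (X x)) = expectation (\<lambda>x. (Im (X x))\<^sup>2) - (expectation (\<lambda>x. Im (X x)))\<^sup>2"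
    by (rule variance_eq[OF iIm iIm2])
  have vRei: "integrable P (\<lambda>x. (Re (X x) - expectation (\<lambda>x. Re (X x)))\<^sup>2)"
    using iRe iRe2 by (simp add: power2_diff)
  have vImi: "integrable P (\<lambda>x. (Im (X x) - expectation (\<lambda>x. Im (X x)))\<^sup>2)"
    using iIm iIm2 by (simp add: power2_diff)
  have "cvar P X = (\<integral>x. (Re (X x) - expectation (\<lambda>x. Re (X x)))\<^sup>2 + (Im (X x) - expectation (\<lambda>x. Im (X x)))\<^sup>2 \<partial>P)"
    unfolding cvar_def cmod_power2 by (simp add: reE imE)
  also have "\<dots> = variance (\<lambda>x. Re (X x)) + variance (\<lambda>x. Im (X x))"
    using vRei vImi by simp
  also have "\<dots> \<le> expectation (\<lambda>x. (Re (X x))\<^sup>2) + expectation (\<lambda>x. (Im (X x))\<^sup>2)"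
    unfolding vRe vIm by simp
  also have "\<dots> = (\<integral>x. (cmod (X x))\<^sup>2 \<partial>P)"
    unfolding cmod_power2 using iRe2 iIm2 by simp
  finally show ?thesis .
qed

lemma sq_sum_le: "(norm (a + b :: complex^'m))\<^sup>2 \<le> 2 * (norm a)\<^sup>2 + 2 * (norm b)\<^sup>2"
proof -
  have "norm (a+b) \<le> norm a + norm b" by (rule norm_triangle_ineq)
  then have "(norm (a+b))\<^sup>2 \<le> (norm a + norm b)\<^sup>2" by (intro power_mono) auto
  also have "\<dots> \<le> 2 * (norm a)\<^sup>2 + 2 * (norm b)\<^sup>2"
    by (simp add: power2_sum) (smt (verit) sum_squares_bound)
  finally show ?thesis .
qed

theorem proposition1:
  fixes P :: "'w measure"
    and Hhat :: "'w \<Rightarrow> complex ^ 'm ^ 'k"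
    and phi :: "'w \<Rightarrow> complex ^ 'm"
    and F :: "complex ^ 'm ^ 'k \<Rightarrow> complex ^ 'm ^ 'k"
    and k :: 'k and T :: nat
    and Pmax sigma2 delta2 omega2 \<rho> :: real
  assumes "prob_space P"
    and "T > 0" and "Pmax > 0" and "sigma2 > 0" and "delta2 > 0" and "omega2 > 0"
    and "0 < \<rho>" and "\<rho> \<le> 1"
    and "Hhat \<in> borel_measurable P"
    and "integrable P (\<lambda>x. (norm (Hhat x $ k))\<^sup>2)"
    and "complex_gaussian_vec P phi omega2"
    and "prob_space.indep_set P (sets (vimage_algebra (space P) Hhat borel))
                               (sets (vimage_algebra (space P) phi borel))"
    and "F \<in> borel_measurable borel"
    and "\<And>H. trFFH (F H) \<le> Pmax"
  shows "rbar P Hhat phi F \<rho> sigma2 delta2 k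
           - 1 / real T * (\<Sum>m::'k\<in>UNIV. log 2 (1 + real T * Pmax / delta2 *
                (\<integral>x. (norm (Hhat x $ k + phi x))\<^sup>2 \<partial>P)))
         \<le> rhat P Hhat phi F \<rho> sigma2 delta2 T k
       \<and> rhat P Hhat phi F \<rho> sigma2 delta2 T k \<le> rbar P Hhat phi F \<rho> sigma2 delta2 k"
proof -
  note PS = assms(1)
  interpret prob_space P by fact
  have HM[measurable]: "Hhat \<in> borel_measurable P" by fact
  have FM[measurable]: "F \<in> borel_measurable borel" by fact
  have gv: "complex_gaussian_vec P phi omega2" by fact
  have phiM[measurable]: "phi \<in> borel_measurable P" using gv unfolding complex_gaussian_vec_def by blast
  have HkM[measurable]: "(\<lambda>x. Hhat x $ k) \<in> borel_measurable P" by (rule meas_nth) measurable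
  define h where "h x = Hhat x $ k + phi x" for x
  have hM[measurable]: "h \<in> borel_measurable P" unfolding h_def by measurable
  have FHM[measurable]: "(\<lambda>x. F (Hhat x)) \<in> borel_measurable P" by measurable
  have FHmM: "(\<lambda>x. F (Hhat x) $ m) \<in> borel_measurable P" for m by (rule meas_nth) measurable
  have mom: "integrable lborel (\<lambda>x. normal_density 0 (sqrt (omega2 / 2)) x * x\<^sup>2)"
    using integrable_normal_moment[where \<mu>=0 and \<sigma>="sqrt (omega2 / 2)" and k=2] assms(6) by simp
  have iRe: "integrable P (\<lambda>x. (Re (phi x $ i))\<^sup>2)" for i
  proof -
    have D: "distributed P lborel (\<lambda>x. Re (phi x $ i)) (normal_density 0 (sqrt (omega2 / 2)))"
      using gv unfolding complex_gaussian_vec_def by blast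
    show ?thesis using distributed_integrable[OF D, of "\<lambda>x. x\<^sup>2"] mom by (simp add: normal_density_nonneg)
  qed
  have iIm: "integrable P (\<lambda>x. (Im (phi x $ i))\<^sup>2)" for i
  proof -
    have D: "distributed P lborel (\<lambda>x. Im (phi x $ i)) (normal_density 0 (sqrt (omega2 / 2)))"
      using gv unfolding complex_gaussian_vec_def by blast
    show ?thesis using distributed_integrable[OF D, of "\<lambda>x. x\<^sup>2"] mom by (simp add: normal_density_nonneg)
  qed
  have iphi: "integrable P (\<lambda>x. (norm (phi x))\<^sup>2)"
    unfolding norm_sq_vec cmod_power2 by (rule Bochner_Integration.integrable_sum, rule Bochner_Integration.integrable_add, rule iRe, rule iIm)
  have iHk: "integrable P (\<lambda>x. (norm (Hhat x $ k))\<^sup>2)" by fact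
  have ih: "integrable P (\<lambda>x. (norm (h x))\<^sup>2)"
  proof (rule Bochner_Integration.integrable_bound)
    show "integrable P (\<lambda>x. 2 * (norm (Hhat x $ k))\<^sup>2 + 2 * (norm (phi x))\<^sup>2)"
      using iHk iphi by auto
    show "(\<lambda>x. (norm (h x))\<^sup>2) \<in> borel_measurable P" by measurable
    show "AE x in P. norm ((norm (h x))\<^sup>2) \<le> norm (2 * (norm (Hhat x $ k))\<^sup>2 + 2 * (norm (phi x))\<^sup>2)"
      using sq_sum_le unfolding h_def by auto
  qed
  define E where "E = (\<integral>x. (norm (h x))\<^sup>2 \<partial>P)"
  have E0: "0 \<le> E" unfolding E_def by simp
  have cv: "0 \<le> cvar P (\<lambda>x. herm (h x) (F (Hhat x) $ m)) \<and> cvar P (\<lambda>x. herm (h x) (F (Hhat x) $ m)) \<le> Pmax * E" for m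
  proof
    show "0 \<le> cvar P (\<lambda>x. herm (h x) (F (Hhat x) $ m))" unfolding cvar_def by simp
    have XM[measurable]: "(\<lambda>x. herm (h x) (F (Hhat x) $ m)) \<in> borel_measurable P"
      by (rule meas_herm[OF hM FHmM])
    have bnd: "(cmod (herm (h x) (F (Hhat x) $ m)))\<^sup>2 \<le> Pmax * (norm (h x))\<^sup>2" for x
    proof -
      have "(norm (F (Hhat x) $ m))\<^sup>2 \<le> trFFH (F (Hhat x))"
        unfolding trFFH_def by (rule member_le_sum) auto
      also have "\<dots> \<le> Pmax" by fact
      finally have "(norm (F (Hhat x) $ m))\<^sup>2 \<le> Pmax" .
      then have "(norm (h x))\<^sup>2 * (norm (F (Hhat x) $ m))\<^sup>2 \<le> (norm (h x))\<^sup>2 * Pmax"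
        by (intro mult_left_mono) auto
      then show ?thesis using herm_cs[of "h x" "F (Hhat x) $ m"] by (simp add: mult.commute)
    qed
    have iX: "integrable P (\<lambda>x. (cmod (herm (h x) (F (Hhat x) $ m)))\<^sup>2)"
    proof (rule Bochner_Integration.integrable_bound)
      show "integrable P (\<lambda>x. Pmax * (norm (h x))\<^sup>2)" using ih by auto
      show "(\<lambda>x. (cmod (herm (h x) (F (Hhat x) $ m)))\<^sup>2) \<in> borel_measurable P" by measurable
      show "AE x in P. norm ((cmod (herm (h x) (F (Hhat x) $ m)))\<^sup>2) \<le> norm (Pmax * (norm (h x))\<^sup>2)"
        using bnd \<open>Pmax > 0\<close> by auto
    qed
    have "cvar P (\<lambda>x. herm (h x) (F (Hhat x) $ m)) \<le> (\<integral>x. (cmod (herm (h x) (F (Hhat x) $ m)))\<^sup>2 \<partial>P)"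
      by (rule cvar_le[OF PS XM iX])
    also have "\<dots> \<le> (\<integral>x. Pmax * (norm (h x))\<^sup>2 \<partial>P)"
      by (rule integral_mono[OF iX]) (use ih bnd in auto)
    also have "\<dots> = Pmax * E" unfolding E_def by simp
    finally show "cvar P (\<lambda>x. herm (h x) (F (Hhat x) $ m)) \<le> Pmax * E" .
  qed
  define c where "c = real T / (\<rho> * sigma2 + delta2)"
  have den: "delta2 \<le> \<rho> * sigma2 + delta2" using assms by simp
  have dpos: "0 < \<rho> * sigma2 + delta2" using assms by (auto intro: add_pos_pos)
  have c0: "0 < c" unfolding c_def using assms by (intro divide_pos_pos) (auto intro: add_pos_pos)
  have cle: "c \<le> real T / delta2" unfolding c_def using assms den dpos
    by (intro divide_left_mono) (auto intro: mult_pos_pos)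
  have trm: "0 \<le> log 2 (1 + c * cvar P (\<lambda>x. herm (h x) (F (Hhat x) $ m)))
     \<and> log 2 (1 + c * cvar P (\<lambda>x. herm (h x) (F (Hhat x) $ m))) \<le> log 2 (1 + real T * Pmax / delta2 * E)" for m
  proof -
    have v0: "0 \<le> cvar P (\<lambda>x. herm (h x) (F (Hhat x) $ m))" and v1: "cvar P (\<lambda>x. herm (h x) (F (Hhat x) $ m)) \<le> Pmax * E"
      using cv[of m] by auto
    have a0: "0 \<le> c * cvar P (\<lambda>x. herm (h x) (F (Hhat x) $ m))" using c0 v0 by simp
    have "c * cvar P (\<lambda>x. herm (h x) (F (Hhat x) $ m)) \<le> real T / delta2 * (Pmax * E)"
      using c0 v0 v1 cle by (intro mult_mono) auto
    also have "\<dots> = real T * Pmax / delta2 * E" by simp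
    finally have a1: "c * cvar P (\<lambda>x. herm (h x) (F (Hhat x) $ m)) \<le> real T * Pmax / delta2 * E" .
    show ?thesis using a0 a1 by auto
  qed
  have S1: "(\<Sum>m\<in>UNIV. log 2 (1 + c * cvar P (\<lambda>x. herm (h x) (F (Hhat x) $ m))))
           \<le> (\<Sum>m::'k\<in>UNIV. log 2 (1 + real T * Pmax / delta2 * E))"
    by (rule sum_mono) (use trm in blast)
  have S0: "0 \<le> (\<Sum>m\<in>UNIV. log 2 (1 + c * cvar P (\<lambda>x. herm (h x) (F (Hhat x) $ m))))"
    by (rule sum_nonneg) (use trm in blast)
  have T0: "0 < 1 / real T" using assms by simp
  have rh: "rhat P Hhat phi F \<rho> sigma2 delta2 T k = rbar P Hhat phi F \<rho> sigma2 delta2 k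
      - 1 / real T * (\<Sum>m\<in>UNIV. log 2 (1 + c * cvar P (\<lambda>x. herm (h x) (F (Hhat x) $ m))))"
    unfolding rhat_def c_def h_def by simp
  have X1: "1 / real T * (\<Sum>m\<in>UNIV. log 2 (1 + c * cvar P (\<lambda>x. herm (h x) (F (Hhat x) $ m))))
           \<le> 1 / real T * (\<Sum>m::'k\<in>UNIV. log 2 (1 + real T * Pmax / delta2 * E))"
    by (rule mult_left_mono[OF S1]) (use T0 in simp)
  have X0: "0 \<le> 1 / real T * (\<Sum>m\<in>UNIV. log 2 (1 + c * cvar P (\<lambda>x. herm (h x) (F (Hhat x) $ m))))"
    using S0 T0 by simp
  show ?thesis unfolding rh using X0 X1 unfolding E_def h_def by linarith
qed
end
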